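(* Let $G$ be a threshold graph with $s=\mathrm{seq}(G)$, and suppose $s$ contains at least two ones. Then the length $\psi(G)$ of a longest cycle in $G$ is $$\psi(G)=r(s)+1-h(s'),$$ where $s'=s_1s_2\cdots s_{r(s)-1}$.
   Context: A threshold graph on $n\ge1$ vertices is built from a base vertex $v_0$ by successively adding $v_1,\dots,v_{n-1}$, each either isolated (adjacent to no earlier vertex) or dominating (adjacent to all earlier vertices); its creation sequence $\mathrm{seq}(G)=s_1\cdots s_{n-1}$ has $s_i=1$ if $v_i$ is dominating and $s_i=0$ otherwise. For a binary string $s=s_1\cdots s_m$: $r(s)=\max(\{0\}\cup\{i: s_i=1\})$ (index of the right-most one, or $0$); for $0\le k\le m$ the $k$-th tail is $s_{m-k+1}\cdots s_m$ (empty for $k=0$), $z_k(s)$, $u_k(s)$ are its numbers of zeros and ones, and $h(s)=\max_{0\le k\le m}\{z_k(s)-u_k(s)\}$. *)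

theory Defs
  imports Main
begin

text \<open>A creation sequence is a list s of booleans, s ! (i-1) = s_i (True = dominating = 1).
 The threshold graph with sequence s has vertices 0..length s (vertex i is v_i);
 for i < j, v_i and v_j are adjacent iff v_j is dominating, i.e. s_j = 1.\<close>

definition thr_adj :: "bool list \<Rightarrow> nat \<Rightarrow> nat \<Rightarrow> bool" where
  "thr_adj s i j \<longleftrightarrow> i \<noteq> j \<and> i \<le> length s \<and> j \<le> length s \<and> s ! (max i j - 1)"

definition thr_cycle :: "bool list \<Rightarrow> nat list \<Rightarrow> bool" where
  "thr_cycle s c \<longleftrightarrow> length c \<ge> 3 \<and> distinct c \<and> set c \<subseteq> {0..length s} \<and>
     (\<forall>i < length c. thr_adj s (c ! i) (c ! ((i + 1) mod length c)))"

definition longest_cycle :: "bool list \<Rightarrow> nat" where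
  "longest_cycle s = Max (length ` {c. thr_cycle s c})"

definition rmost :: "bool list \<Rightarrow> nat" where
  "rmost s = Max ({0} \<union> {i. 1 \<le> i \<and> i \<le> length s \<and> s ! (i - 1)})"

definition tail :: "nat \<Rightarrow> bool list \<Rightarrow> bool list" where
  "tail k s = drop (length s - k) s"

definition hval :: "bool list \<Rightarrow> int" where
  "hval s = Max ((\<lambda>k. int (count_list (tail k s) False) - int (count_list (tail k s) True))
                  ` {0..length s})"

end

theory Submission
  imports Defs
begin

fun cnt :: "bool list \<Rightarrow> nat \<Rightarrow> nat" where
  "cnt [] g = 0"
| "cnt (b # bs) g = (if b then 1 + cnt bs (g+1) else if 2 \<le> g then 1 + cnt bs (g-1) else cnt bs g)"

fun Hf :: "bool list \<Rightarrow> int" where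
  "Hf [] = 0"
| "Hf (b # bs) = max 0 (Hf bs + (if b then -1 else 1))"

lemma Hf_nonneg: "0 \<le> Hf ws"
  by (cases ws) auto

lemma cnt_Hf: "1 \<le> g \<Longrightarrow> int (cnt ws g) = int (length ws) - max 0 (Hf ws - int g + 1)"
proof (induction ws arbitrary: g)
  case Nil then show ?case by simp
next
  case (Cons b bs)
  have h0: "0 \<le> Hf bs" by (rule Hf_nonneg)
  show ?case
  proof (cases b)
    case True
    then show ?thesis using Cons.IH[of "g+1"] Cons.prems h0 by auto
  next
    case False
    show ?thesis
    proof (cases "2 \<le> g")
      case True
      then show ?thesis using Cons.IH[of "g-1"] Cons.prems h0 \<open>\<not> b\<close> by auto
    next
      case F2: False
      then have "g = 1" using Cons.prems by auto
      then show ?thesis using Cons.IH[of g] Cons.prems h0 \<open>\<not> b\<close> by auto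
    qed
  qed
qed

definition Dv :: "bool list \<Rightarrow> nat \<Rightarrow> int" where
  "Dv ws k = int (count_list (take k ws) False) - int (count_list (take k ws) True)"

lemma Hf_prop: "(\<forall>k\<le>length ws. Dv ws k \<le> Hf ws) \<and> (\<exists>k\<le>length ws. Dv ws k = Hf ws)"
proof (induction ws)
  case Nil then show ?case by (simp add: Dv_def)
next
  case (Cons b bs)
  then obtain k0 where k0: "k0 \<le> length bs" "Dv bs k0 = Hf bs" by blast
  have D0: "Dv (b#bs) 0 = 0" by (simp add: Dv_def)
  have DS: "Dv (b#bs) (Suc k) = Dv bs k + (if b then -1 else 1)" for k
    by (simp add: Dv_def)
  have A: "\<forall>k\<le>length (b#bs). Dv (b#bs) k \<le> Hf (b#bs)"
  proof (intro allI impI)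
    fix k assume "k \<le> length (b#bs)"
    then show "Dv (b#bs) k \<le> Hf (b#bs)"
      using Cons.IH D0 DS by (cases k) auto
  qed
  have B: "\<exists>k\<le>length (b#bs). Dv (b#bs) k = Hf (b#bs)"
  proof (cases "Hf bs + (if b then -1 else 1) \<ge> 0")
    case True
    then show ?thesis using k0 DS[of k0] by (intro exI[of _ "Suc k0"]) auto
  next
    case False
    then show ?thesis using D0 by (intro exI[of _ 0]) auto
  qed
  show ?case using A B by blast
qed

lemma hval_Hf: "hval t = Hf (rev t)"
proof -
  have eq: "(\<lambda>k. int (count_list (tail k t) False) - int (count_list (tail k t) True)) k = Dv (rev t) k"
    if "k \<le> length t" for k
  proof -
    have "tail k t = rev (take k (rev t))"
      by (simp add: tail_def rev_take)
    then show ?thesis by (simp add: Dv_def)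
  qed
  have im: "(\<lambda>k. int (count_list (tail k t) False) - int (count_list (tail k t) True)) ` {0..length t}
      = Dv (rev t) ` {0..length t}"
    using eq by (intro image_cong) auto
  show ?thesis unfolding hval_def im
    proof (intro Max_eqI)
    obtain k where "k \<le> length (rev t)" "Dv (rev t) k = Hf (rev t)" using Hf_prop[of "rev t"] by blast
    then show "Hf (rev t) \<in> Dv (rev t) ` {0..length t}" by force
  qed (use Hf_prop[of "rev t"] in auto)
qed

lemma cnt_ge: "count_list ws True \<le> cnt ws g"
proof (induction ws arbitrary: g)
  case Nil then show ?case by simp
next
  case (Cons a ws) then show ?case by (simp add: le_SucI)
qed

lemma adj_sym: "thr_adj s x y = thr_adj s y x"
  unfolding thr_adj_def by (auto simp: max.commute)

lemma adj_sym': "(\<lambda>x y. thr_adj s y x) = thr_adj s"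
  using adj_sym by blast

lemma paths:
  "n \<le> length s \<Longrightarrow> 1 \<le> g \<Longrightarrow> \<exists>P. (\<forall>p\<in>set P. p \<noteq> [] \<and> successively (thr_adj s) p)
     \<and> distinct (concat P) \<and> set (concat P) \<subseteq> {0..n} \<and> length P \<le> g
     \<and> length (concat P) = 1 + cnt (rev (take n s)) g"
proof (induction n arbitrary: g)
  case 0
  then show ?case by (intro exI[of _ "[[0]]"]) auto
next
  case (Suc n)
  have rv: "rev (take (Suc n) s) = s!n # rev (take n s)"
    using Suc.prems by (simp add: take_Suc_conv_app_nth)
  have nl: "n \<le> length s" using Suc.prems by simp
  have adjw: "thr_adj s (Suc n) v" if "s!n" "v \<le> n" for v
    using that Suc.prems unfolding thr_adj_def by (auto simp: max_def)
  show ?case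
  proof (cases "s!n")
    case True
    obtain P where P: "\<forall>p\<in>set P. p \<noteq> [] \<and> successively (thr_adj s) p"
      "distinct (concat P)" "set (concat P) \<subseteq> {0..n}" "length P \<le> g+1"
      "length (concat P) = 1 + cnt (rev (take n s)) (g+1)"
      using Suc.IH[OF nl, of "g+1"] by auto
    show ?thesis
    proof (cases P)
      case Nil then show ?thesis using P by simp
    next
      case (Cons p1 rest)
      note C1 = this
      show ?thesis
      proof (cases rest)
        case Nil
        have "p1 \<noteq> []" "successively (thr_adj s) p1" using P C1 by auto
        moreover have "hd p1 \<le> n" using P C1 \<open>p1 \<noteq> []\<close> by (cases p1) auto
        ultimately have "successively (thr_adj s) (Suc n # p1)"
          using adjw[OF True] by (cases p1) (auto simp: successively_Cons)
        moreover have "Suc n \<notin> set p1" using P C1 by auto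
        ultimately show ?thesis using P C1 Nil rv True Suc.prems
          by (intro exI[of _ "[Suc n # p1]"]) auto
      next
        case (Cons p2 rest')
        have ne: "p1 \<noteq> []" "p2 \<noteq> []" using P C1 Cons by auto
        have s1: "successively (thr_adj s) p1" "successively (thr_adj s) p2" using P C1 Cons by auto
        have h1: "hd p1 \<le> n" "hd p2 \<le> n" using P C1 Cons ne by (auto simp: hd_in_set dest!: hd_in_set)
        have A: "successively (thr_adj s) (rev p1)" using s1 by (simp only: successively_rev adj_sym')
        have B: "successively (thr_adj s) (Suc n # p2)"
            using s1 ne h1 adjw[OF True] by (cases p2) (auto simp: successively_Cons)
        have Cc: "thr_adj s (hd p1) (Suc n)"
            using ne h1 adjw[OF True] adj_sym by metis
        have "successively (thr_adj s) (rev p1 @ Suc n # p2)"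
          using A B Cc ne by (simp add: successively_append_iff last_rev)
        moreover have "Suc n \<notin> set p1" "Suc n \<notin> set p2" using P C1 Cons by auto
        ultimately show ?thesis using P C1 Cons rv True Suc.prems
          by (intro exI[of _ "(rev p1 @ Suc n # p2) # rest'"]) auto
      qed
    qed
  next
    case False
    show ?thesis
    proof (cases "2 \<le> g")
      case True
      obtain P where P: "\<forall>p\<in>set P. p \<noteq> [] \<and> successively (thr_adj s) p"
        "distinct (concat P)" "set (concat P) \<subseteq> {0..n}" "length P \<le> g-1"
        "length (concat P) = 1 + cnt (rev (take n s)) (g-1)"
        using Suc.IH[OF nl, of "g-1"] True by fastforce
      then show ?thesis using rv True \<open>\<not> s!n\<close>
        by (intro exI[of _ "[Suc n] # P"]) auto
    next
      case F2: False
      obtain P where P: "\<forall>p\<in>set P. p \<noteq> [] \<and> successively (thr_adj s) p"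
        "distinct (concat P)" "set (concat P) \<subseteq> {0..n}" "length P \<le> g"
        "length (concat P) = 1 + cnt (rev (take n s)) g"
        using Suc.IH[OF nl Suc.prems(2)] by auto
      then show ?thesis using rv F2 \<open>\<not> s!n\<close>
        by (intro exI[of _ P]) auto
    qed
  qed
qed


lemma cyc_change:
  assumes "p < L" "q < L" "P p" "\<not> P q"
  shows "\<exists>i<L. P i \<and> \<not> P (Suc i mod L)"
proof (rule ccontr)
  assume na: "\<not> ?thesis"
  have "P ((p + j) mod L)" for j
  proof (induction j)
    case 0 then show ?case using assms by simp
  next
    case (Suc j)
    have "(p + Suc j) mod L = Suc ((p + j) mod L) mod L" by (simp add: mod_Suc_eq)
    moreover have "(p+j) mod L < L" using assms by simp
    ultimately show ?case using na Suc by auto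
  qed
  from this[of "q + L - p"] have "P ((q + L) mod L)" using assms by simp
  then show False using assms by simp
qed

lemma count_card: "count_list xs b = card {i. i < length xs \<and> xs!i = b}"
  by (simp add: count_list_eq_length_filter length_filter_conv_card eq_commute)

lemma upper:
  assumes r1: "1 \<le> r" "r \<le> length s" "s!(r-1)"
    and ri: "\<forall>i<length s. s!i \<longrightarrow> i < r"
    and cyc: "thr_cycle s c" and k: "k \<le> r - 1"
  shows "int (length c) + (int (count_list (tail k (take (r-1) s)) False)
            - int (count_list (tail k (take (r-1) s)) True)) \<le> int r + 1"
proof -
  define L where "L = length c"
  have L3: "3 \<le> L" and dc: "distinct c" and sc: "set c \<subseteq> {0..length s}"
    and adj: "\<forall>i<L. thr_adj s (c!i) (c!(Suc i mod L))"
    using cyc unfolding thr_cycle_def L_def by auto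
  have adjv: "thr_adj s x y \<Longrightarrow> x < y \<Longrightarrow> s!(y-1) \<and> y \<le> r" for x y
  proof -
    assume a: "thr_adj s x y" "x < y"
    then have "s!(y-1)" "y \<le> length s" "0 < y" unfolding thr_adj_def by (auto simp: max_def)
    moreover have "y - 1 < length s" using \<open>y \<le> length s\<close> \<open>0 < y\<close> by simp
    ultimately show ?thesis using ri[rule_format, of "y-1"] by simp
  qed
  have S1: "\<forall>v\<in>set c. v \<le> r"
  proof
    fix v assume "v \<in> set c"
    then obtain i where i: "i < L" "c!i = v" by (auto simp: L_def in_set_conv_nth)
    have a: "thr_adj s v (c!(Suc i mod L))" using adj i by auto
    then show "v \<le> r"
      using adjv[OF a] adjv[OF a[unfolded adj_sym[of s v]]] unfolding thr_adj_def
      by (cases "v < c!(Suc i mod L)") auto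
  qed
  define xs where "xs = tail k (take (r-1) s)"
  have lxs: "length xs = k" using k r1 by (simp add: xs_def tail_def)
  have nxs: "xs!i = s!(i + (r-k) - 1)" if "i < k" for i
    using that k r1 by (simp add: xs_def tail_def add.commute)
  define Z where "Z = {v. r-k \<le> v \<and> v < r \<and> \<not> s!(v-1)}"
  define U where "U = {v. r-k \<le> v \<and> v \<le> r \<and> s!(v-1)}"
  have injsh: "inj_on (\<lambda>i. i + (r-k)) X" for X by (auto simp: inj_on_def)
  have Zim: "Z = (\<lambda>i. i + (r-k)) ` {i. i < length xs \<and> xs!i = False}"
  proof (rule set_eqI, rule iffI)
    fix v assume "v \<in> Z"
    then show "v \<in> (\<lambda>i. i + (r-k)) ` {i. i < length xs \<and> xs!i = False}"
      using k r1 lxs nxs unfolding Z_def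
      by (intro image_eqI[of _ _ "v - (r-k)"]) auto
  next
    fix v assume "v \<in> (\<lambda>i. i + (r-k)) ` {i. i < length xs \<and> xs!i = False}"
    then show "v \<in> Z" using k r1 lxs nxs unfolding Z_def by auto
  qed
  have Uim: "U = insert r ((\<lambda>i. i + (r-k)) ` {i. i < length xs \<and> xs!i = True})"
  proof (rule set_eqI, rule iffI)
    fix v assume v: "v \<in> U"
    show "v \<in> insert r ((\<lambda>i. i + (r-k)) ` {i. i < length xs \<and> xs!i = True})"
    proof (cases "v = r")
      case False
      then show ?thesis using v k r1 lxs nxs unfolding U_def
        by (intro insertI2 image_eqI[of _ _ "v - (r-k)"]) auto
    qed simp
  next
    fix v assume "v \<in> insert r ((\<lambda>i. i + (r-k)) ` {i. i < length xs \<and> xs!i = True})"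
    then show "v \<in> U" using k r1 lxs nxs unfolding U_def by auto
  qed
  have cZ: "card Z = count_list xs False"
    unfolding Zim count_card by (rule card_image[OF injsh])
  have cU: "card U = count_list xs True + 1"
  proof -
    have "r \<notin> (\<lambda>i. i + (r-k)) ` {i. i < length xs \<and> xs!i = True}" using lxs k r1 by auto
    then show ?thesis unfolding Uim count_card
      by (simp add: card_image[OF injsh])
  qed
  have fZ: "finite Z" "finite U" unfolding Z_def U_def by auto
  have ZU: "Z \<inter> U = {}" unfolding Z_def U_def by auto
  define suc where "suc i = Suc i mod L" for i
  define A where "A = {i. i < L \<and> c!i \<in> Z}"
  define B where "B = {i. i < L \<and> c!i \<in> U}"
  define R where "R = {i. i < L \<and> c!i \<notin> U \<and> c!(suc i) \<in> U}"
  have injc: "inj_on (nth c) X" if "X \<subseteq> {..<L}" for X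
    using dc that by (intro inj_on_nth) (auto simp: L_def)
  have cA: "card A = card (Z \<inter> set c)"
  proof -
    have "nth c ` A = Z \<inter> set c" unfolding A_def L_def by (auto simp: in_set_conv_nth)
    moreover have "A \<subseteq> {..<L}" by (auto simp: A_def)
    ultimately show ?thesis using card_image[OF injc[of A]] by simp
  qed
  have cB: "card B = card (U \<inter> set c)"
  proof -
    have "nth c ` B = U \<inter> set c" unfolding B_def L_def by (auto simp: in_set_conv_nth)
    moreover have "B \<subseteq> {..<L}" by (auto simp: B_def)
    ultimately show ?thesis using card_image[OF injc[of B]] by simp
  qed
  have BU: "card B \<le> card U" unfolding cB using fZ by (intro card_mono) auto
  have sucL: "suc i < L" for i using L3 by (simp add: suc_def)
  have AR: "A \<subseteq> R"
  proof
    fix i assume "i \<in> A"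
    then have i: "i < L" "c!i \<in> Z" by (auto simp: A_def)
    have a: "thr_adj s (c!i) (c!(suc i))" using adj i by (simp add: suc_def)
    have "c!i < c!(suc i)"
    proof (rule ccontr)
      assume "\<not> c!i < c!(suc i)"
      then show False using a i(2) unfolding thr_adj_def Z_def by (auto simp: max_def)
    qed
    then have "c!(suc i) \<in> U" using adjv[OF a] i(2) unfolding U_def Z_def by auto
    then show "i \<in> R" using i ZU unfolding R_def by auto
  qed
  have RB: "card R \<le> card B"
  proof -
    have "inj_on suc {..<L}"
    proof (rule inj_onI)
      fix i j assume "i \<in> {..<L}" "j \<in> {..<L}" "suc i = suc j"
      moreover have "Suc x mod L = (if Suc x = L then 0 else Suc x)" if "x < L" for x
        using that by auto
      ultimately show "i = j" unfolding suc_def by (auto split: if_splits)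
    qed
    then have "card (suc ` R) = card R" by (rule card_image[OF inj_on_subset]) (auto simp: R_def)
    moreover have "suc ` R \<subseteq> B" using sucL unfolding R_def B_def by auto
    moreover have "finite B" unfolding B_def by auto
    ultimately show ?thesis by (metis card_mono)
  qed
  have fR: "finite R" unfolding R_def by auto
  have cS: "card (set c) = L" using dc by (simp add: L_def distinct_card)
  have cZc: "card (Z - set c) = card Z - card A" using fZ by (simp add: cA card_Diff_subset_Int)
  have AZ: "card A \<le> card Z" unfolding cA using fZ by (intro card_mono) auto
  show ?thesis
  proof (cases "\<exists>p<L. c!p < r-k")
    case False
    then have "set c \<subseteq> {r-k..r} - (Z - set c)" using S1
      by (auto simp: in_set_conv_nth L_def not_less; metis leD)
    then have "card (set c) \<le> card ({r-k..r} - (Z - set c))" by (intro card_mono) auto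
    also have "\<dots> = card {r-k..r} - card (Z - set c)"
      by (rule card_Diff_subset) (auto simp: Z_def fZ)
    finally have "L \<le> (k + 1) - (card Z - card A)" using cS k r1 by (simp add: cZc)
    moreover have "card A \<le> card U" using AR RB BU card_mono[OF fR AR] by linarith
    ultimately have "L + card Z \<le> k + 2 + (card U - 1)" using L3 AZ by linarith
    then show ?thesis using cZ cU AZ k r1 unfolding xs_def[symmetric] L_def[symmetric] by linarith
  next
    case True
    then obtain p where p: "p < L" "c!p < r-k" by blast
    have aU: "card A + 1 \<le> card U"
    proof (cases "A = {}")
      case True then show ?thesis using cU by simp
    next
      case False
      then obtain q where q: "q < L" "c!q \<in> Z" by (auto simp: A_def)
      then have "\<not> c!q < r-k" by (auto simp: Z_def)
      from cyc_change[of p L q "\<lambda>i. c!i < r-k", OF p(1) q(1) p(2) this]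
      obtain i where i: "i < L" "c!i < r-k" "\<not> c!(suc i) < r-k" by (auto simp: suc_def)
      have a: "thr_adj s (c!i) (c!(suc i))" using adj i by (simp add: suc_def)
      have "c!(suc i) \<in> U" using adjv[OF a] i unfolding U_def by auto
      moreover have "c!i \<notin> U" "c!i \<notin> Z" using i unfolding U_def Z_def by auto
      ultimately have "i \<in> R - A" using i unfolding R_def A_def by auto
      then have "A \<subset> R" using AR by auto
      then have "card A < card R" using fR by (rule psubset_card_mono[rotated])
      then show ?thesis using RB BU by linarith
    qed
    have "set c \<subseteq> {0..r} - (Z - set c)" using S1 by auto
    then have "card (set c) \<le> card ({0..r} - (Z - set c))" by (intro card_mono) auto
    also have "\<dots> = card {0..r} - card (Z - set c)"
      by (rule card_Diff_subset) (auto simp: Z_def fZ)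
    finally have "L \<le> (r + 1) - (card Z - card A)" using cS by (simp add: cZc)
    then have "L + card Z \<le> r + 1 + (card U - 1)" using L3 AZ aU by linarith
    then show ?thesis using cZ cU AZ aU unfolding xs_def[symmetric] L_def[symmetric] by linarith
  qed
qed


theorem mainTheorem9:
  fixes s :: "bool list"
  assumes "count_list s True \<ge> 2"
  shows "int (longest_cycle s) = int (rmost s) + 1 - hval (take (rmost s - 1) s)"
proof -
  define r where "r = rmost s"
  define t where "t = take (r-1) s"
  define S where "S = {i. 1 \<le> i \<and> i \<le> length s \<and> s!(i-1)}"
  have fS: "finite ({0} \<union> S)" unfolding S_def by auto
  have rM: "r = Max ({0} \<union> S)" unfolding r_def rmost_def S_def by simp
  have "True \<in> set s" using assms count_notin by fastforce
  then obtain j where j: "j < length s" "s!j" by (auto simp: in_set_conv_nth)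
  have ge: "i \<le> r" if "i \<in> S" for i using fS that unfolding rM by simp
  have "Suc j \<in> S" using j unfolding S_def by auto
  then have r1: "1 \<le> r" using ge by fastforce
  have "r \<in> {0} \<union> S" unfolding rM using fS by (intro Max_in) auto
  then have rS: "r \<in> S" using r1 by auto
  then have rl: "r \<le> length s" and rb: "s!(r-1)" unfolding S_def by auto
  have ri: "\<forall>i<length s. s!i \<longrightarrow> i < r"
  proof (intro allI impI)
    fix i assume "i < length s" "s!i"
    then have "Suc i \<in> S" unfolding S_def by auto
    then show "i < r" using ge by fastforce
  qed
  have lt: "length t = r - 1" using rl by (simp add: t_def)
  have ct: "1 \<le> count_list t True"
  proof -
    have d: "drop (r-1) s = s!(r-1) # drop r s" using rl r1
      by (metis Cons_nth_drop_Suc Suc_diff_1 diff_less less_le_trans zero_less_one)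
    have "True \<notin> set (drop r s)"
    proof
      assume "True \<in> set (drop r s)"
      then obtain i where "i < length s - r" "s!(r+i)" by (auto simp: in_set_conv_nth)
      then show False using ri[rule_format, of "r+i"] by linarith
    qed
    then have "count_list (drop (r-1) s) True = 1" using d rb by simp
    moreover have "count_list s True = count_list t True + count_list (drop (r-1) s) True"
      unfolding t_def by (metis append_take_drop_id count_list_append)
    ultimately show ?thesis using assms by simp
  qed
  obtain P where P: "\<forall>p\<in>set P. p \<noteq> [] \<and> successively (thr_adj s) p"
     "distinct (concat P)" "set (concat P) \<subseteq> {0..r-1}" "length P \<le> 1"
     "length (concat P) = 1 + cnt (rev (take (r-1) s)) 1"
  proof -
    have "r - 1 \<le> length s" using rl by simp
    from paths[OF this, of 1] show ?thesis using that by blast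
  qed
  then obtain p where pP: "P = [p]" by (cases P) auto
  have cntv: "int (cnt (rev t) 1) = int (r - 1) - hval t"
    using cnt_Hf[of 1 "rev t"] lt Hf_nonneg[of "rev t"] by (simp add: hval_Hf)
  have cntg: "1 \<le> cnt (rev t) 1" using cnt_ge[of "rev t" 1] ct by simp
  define c0 where "c0 = p @ [r]"
  have lc0: "length c0 = 2 + cnt (rev t) 1" using P pP by (simp add: c0_def t_def)
  have adjr: "thr_adj s v r" if "v \<le> r - 1" for v
    using that r1 rl rb unfolding thr_adj_def by (auto simp: max_def)
  have pne: "p \<noteq> []" and sp: "successively (thr_adj s) p" using P pP by auto
  have pr: "\<forall>v\<in>set p. v \<le> r - 1" using P pP by auto
  have sc0: "successively (thr_adj s) c0"
    unfolding c0_def using sp pne pr adjr by (simp add: successively_append_iff)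
  have cyc0: "thr_cycle s c0"
    unfolding thr_cycle_def
  proof (intro conjI allI impI)
    show "3 \<le> length c0" using lc0 cntg by simp
    show "distinct c0" using P pP pr r1 unfolding c0_def by auto
    show "set c0 \<subseteq> {0..length s}" using pr rl unfolding c0_def by auto
    fix i assume i: "i < length c0"
    show "thr_adj s (c0 ! i) (c0 ! ((i + 1) mod length c0))"
    proof (cases "Suc i < length c0")
      case True
      then show ?thesis using successively_nth[OF sc0 True] by simp
    next
      case False
      then have ii: "i = length p" "Suc i = length c0" using i by (auto simp: c0_def)
      then have "c0 ! i = r" "c0 ! ((i+1) mod length c0) = hd p" using pne
        by (auto simp: c0_def nth_append hd_conv_nth)
      moreover have "hd p \<le> r - 1" using pr pne by simp
      ultimately show ?thesis using adjr adj_sym by metis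
    qed
  qed
  obtain k where k: "k \<in> {0..length t}"
    "hval t = int (count_list (tail k t) False) - int (count_list (tail k t) True)"
  proof -
    have "hval t \<in> (\<lambda>k. int (count_list (tail k t) False) - int (count_list (tail k t) True)) ` {0..length t}"
      unfolding hval_def by (intro Max_in) auto
    then show ?thesis using that by blast
  qed
  have up: "int (length c) \<le> int r + 1 - hval t" if "thr_cycle s c" for c
    using upper[OF r1 rl rb ri that, of k] k lt unfolding t_def by simp
  have fin: "finite (length ` {c. thr_cycle s c})"
  proof (rule finite_subset)
    show "length ` {c. thr_cycle s c} \<subseteq> {..length s + 1}"
    proof
      fix x assume "x \<in> length ` {c. thr_cycle s c}"
      then obtain c where c: "thr_cycle s c" "x = length c" by auto
      then have "length c = card (set c)" "set c \<subseteq> {0..length s}"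
        unfolding thr_cycle_def by (auto simp: distinct_card)
      then have "length c \<le> card {0..length s}" by (metis card_mono finite_atLeastAtMost)
      then show "x \<in> {..length s + 1}" using c by simp
    qed
  qed simp
  have "longest_cycle s = length c0"
    unfolding longest_cycle_def
  proof (rule Max_eqI[OF fin])
    fix y assume "y \<in> length ` {c. thr_cycle s c}"
    then obtain c where "thr_cycle s c" "y = length c" by auto
    then show "y \<le> length c0" using up[of c] lc0 cntv r1 by linarith
  next
    show "length c0 \<in> length ` {c. thr_cycle s c}" using cyc0 by auto
  qed
  then show ?thesis using lc0 cntv r1 unfolding r_def[symmetric] t_def[symmetric] by simp
qed

end
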